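(* With $R^+_K(P)$ and $R^-_K(P)$ as defined in the context, $$\lim_{P\to\infty}R^+_K(P)=E\left[\left\{\log\frac{|H_{\max}|^2}{|H_e|^2}\right\}^+\right],\qquad \lim_{P\to\infty}R^-_K(P)=\max_{T\ge0}\Pr(|H_{\max}|^2\ge T)\,E\left[\log\frac{|H_{\max}|^2}{|H_e|^2}\ \Big|\ |H_{\max}|^2\ge T\right].$$
   Context: $\{v\}^+=\max\{0,v\}$. $H_1,\dots,H_K,H_e$ are independent with $H_i\sim\mathcal{CN}(0,\mu_i)$ (the fading gains of $K$ intended receivers and an eavesdropper in the fast-fading channel $y_i(t)=h_i(t)x(t)+z_i(t)$ with unit-variance complex Gaussian noise), and $|H_{\max}|^2=\max_{1\le i\le K}|H_i|^2$. For $P>0$, with $P(\cdot)$ ranging over nonnegative functions of $H_{\max}$ with $E[P(H_{\max})]\le P$: $R^+_K(P)=\max_{P(\cdot)}E[\{\log(1+|H_{\max}|^2P(H_{\max}))-\log(1+|H_e|^2P(H_{\max}))\}^+]$ and $R^-_K(P)=\max_{P(\cdot)}E[\log(1+|H_{\max}|^2P(H_{\max}))-\log(1+|H_e|^2P(H_{\max}))]$. *)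

theory Defs
  imports "HOL-Probability.Probability"
begin

definition cn_density :: "real \<Rightarrow> complex \<Rightarrow> real" where
  "cn_density mu z = exp (- (cmod z)\<^sup>2 / mu) / (pi * mu)"

definition Gmax :: "nat \<Rightarrow> (nat \<Rightarrow> 'a \<Rightarrow> complex) \<Rightarrow> 'a \<Rightarrow> real" where
  "Gmax K H w = Max ((\<lambda>i. (cmod (H i w))\<^sup>2) ` {..<K})"

definition admissible_power ::
  "'a measure \<Rightarrow> nat \<Rightarrow> (nat \<Rightarrow> 'a \<Rightarrow> complex) \<Rightarrow> real \<Rightarrow> (real \<Rightarrow> real) set" where
  "admissible_power M K H P =
     {p. p \<in> borel_measurable borel \<and> (\<forall>g. 0 \<le> p g) \<and>
         integrable M (\<lambda>w. p (Gmax K H w)) \<and> (\<integral>w. p (Gmax K H w) \<partial>M) \<le> P}"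

definition R_plus ::
  "'a measure \<Rightarrow> nat \<Rightarrow> (nat \<Rightarrow> 'a \<Rightarrow> complex) \<Rightarrow> ('a \<Rightarrow> complex) \<Rightarrow> real \<Rightarrow> real" where
  "R_plus M K H He P = (SUP p \<in> admissible_power M K H P.
      \<integral>w. max 0 (ln (1 + Gmax K H w * p (Gmax K H w))
                   - ln (1 + (cmod (He w))\<^sup>2 * p (Gmax K H w))) \<partial>M)"

definition R_minus ::
  "'a measure \<Rightarrow> nat \<Rightarrow> (nat \<Rightarrow> 'a \<Rightarrow> complex) \<Rightarrow> ('a \<Rightarrow> complex) \<Rightarrow> real \<Rightarrow> real" where
  "R_minus M K H He P = (SUP p \<in> admissible_power M K H P.
      \<integral>w. (ln (1 + Gmax K H w * p (Gmax K H w))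
             - ln (1 + (cmod (He w))\<^sup>2 * p (Gmax K H w))) \<partial>M)"

definition cond_exp_event :: "'a measure \<Rightarrow> ('a \<Rightarrow> real) \<Rightarrow> 'a set \<Rightarrow> real" where
  "cond_exp_event M X A = (\<integral>w. indicator A w * X w \<partial>M) / measure M A"

end

theory Submission
  imports Defs
begin

lemma ln_diff_bound:
  fixes a b p :: real
  assumes a: "a > 0" and b: "b > 0" and p: "p \<ge> 0"
  shows "\<bar>ln (1 + a*p) - ln (1 + b*p)\<bar> \<le> \<bar>ln a - ln b\<bar>"
    and "ln (1 + a*p) - ln (1 + b*p) \<le> max 0 (ln a - ln b)"
proof -
  have key: "0 \<le> ln (1 + x*p) - ln (1 + y*p) \<and> ln (1 + x*p) - ln (1 + y*p) \<le> ln x - ln y"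
    if "x > 0" "y > 0" "y \<le> x" for x y :: real
  proof
    have "1 + y*p \<le> 1 + x*p" using that p by (simp add: mult_right_mono)
    moreover have "0 < 1 + y*p" using that p by (simp add: add_pos_nonneg)
    ultimately show "0 \<le> ln (1 + x*p) - ln (1 + y*p)" by simp
    have "(1 + x*p) * y \<le> (1 + y*p) * x" using that p by (simp add: algebra_simps)
    then have "(1 + x*p) / (1 + y*p) \<le> x / y" using that p
      by (simp add: divide_simps mult.commute add_pos_nonneg)
    then have "ln ((1 + x*p) / (1 + y*p)) \<le> ln (x / y)" using that p
      by (subst ln_le_cancel_iff) (auto intro!: divide_pos_pos add_pos_nonneg)
    moreover have "ln ((1 + x*p) / (1 + y*p)) = ln (1 + x*p) - ln (1 + y*p)"
      using that p by (intro ln_divide_pos) (auto intro!: add_pos_nonneg)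
    moreover have "ln (x / y) = ln x - ln y" using that by (intro ln_divide_pos) auto
    ultimately show "ln (1 + x*p) - ln (1 + y*p) \<le> ln x - ln y" by simp
  qed
  show "\<bar>ln (1 + a*p) - ln (1 + b*p)\<bar> \<le> \<bar>ln a - ln b\<bar>"
    using key[of a b] key[of b a] a b by (cases "b \<le> a") auto
  show "ln (1 + a*p) - ln (1 + b*p) \<le> max 0 (ln a - ln b)"
    using key[of a b] key[of b a] a b by (cases "b \<le> a") auto
qed

lemma ln_tangent:
  fixes p t m :: real
  assumes p: "p \<ge> 0"
  shows "ln (1 + exp m * p) + (exp m * p / (1 + exp m * p)) * (t - m) \<le> ln (1 + exp t * p)"
proof -
  define A where "A = exp m * p"
  define q where "q = A / (1 + A)"
  have A: "A \<ge> 0" using p by (simp add: A_def)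
  have q: "0 \<le> q" "q \<le> 1" using A by (auto simp: q_def)
  have "exp ((1 - q) *\<^sub>R 0 + q *\<^sub>R (t - m)) \<le> (1 - q) * exp 0 + q * exp (t - m)"
    using q by (intro convex_onD[OF exp_convex]) auto
  also have "(1 - q) * exp 0 + q * exp (t - m) = (1 + exp t * p) / (1 + A)"
  proof -
    have "1 - q = 1 / (1 + A)" using A by (simp add: q_def field_simps)
    moreover have "q * exp (t - m) = exp t * p / (1 + A)"
      using A by (simp add: q_def A_def exp_diff field_simps)
    ultimately show ?thesis by (simp add: add_divide_distrib)
  qed
  finally have "exp (q * (t - m)) \<le> (1 + exp t * p) / (1 + A)" by simp
  then have "q * (t - m) \<le> ln ((1 + exp t * p) / (1 + A))"
    using A p by (subst ln_ge_iff) (auto intro!: divide_pos_pos add_pos_nonneg)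
  also have "\<dots> = ln (1 + exp t * p) - ln (1 + A)"
    using A p by (intro ln_divide_pos) (auto intro!: add_pos_nonneg)
  finally show ?thesis by (simp add: q_def A_def)
qed

lemma ln_diff_tendsto:
  fixes a b :: real
  assumes a: "a > 0" and b: "b > 0"
  shows "((\<lambda>P. ln (1 + a*P) - ln (1 + b*P)) \<longlongrightarrow> ln a - ln b) at_top"
proof -
  have "((\<lambda>P. ln (a + inverse P) - ln (b + inverse P)) \<longlongrightarrow> ln (a + 0) - ln (b + 0)) at_top"
    using a b by (intro tendsto_intros tendsto_inverse_0_at_top filterlim_ident) auto
  moreover have "eventually (\<lambda>P. ln (a + inverse P) - ln (b + inverse P) = ln (1 + a*P) - ln (1 + b*P)) at_top"
    using eventually_gt_at_top[of 0]
  proof eventually_elim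
    case (elim P)
    have "1 + a*P = P * (a + inverse P)" "1 + b*P = P * (b + inverse P)" using elim
      by (auto simp: field_simps)
    moreover have "a + inverse P > 0" "b + inverse P > 0" using elim a b
      by (auto intro!: add_pos_pos)
    ultimately show ?case using elim by (simp add: ln_mult)
  qed
  ultimately show ?thesis by (simp add: tendsto_cong)
qed

lemma gauss_exp_normal:
  fixes mu x :: real assumes mu: "mu > 0"
  shows "exp (- x\<^sup>2 / mu) = sqrt (pi * mu) * normal_density 0 (sqrt (mu/2)) x"
proof -
  have s: "(sqrt (mu/2))\<^sup>2 = mu/2" using mu by simp
  have "sqrt (2 * pi * (mu/2)) = sqrt (pi * mu)" by (simp add: mult.commute)
  then show ?thesis using mu unfolding normal_density_def s
    by (simp add: field_simps)
qed

lemma gauss_integrable: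
  fixes mu :: real assumes mu: "mu > 0"
  shows "integrable lborel (\<lambda>x. exp (- x\<^sup>2 / mu) * (1 + x\<^sup>2))"
proof -
  have i0: "integrable lborel (\<lambda>x. normal_density 0 (sqrt (mu/2)) x * (x - 0)^0)"
    by (rule integrable_normal_moment) (use mu in simp)
  have i2: "integrable lborel (\<lambda>x. normal_density 0 (sqrt (mu/2)) x * (x - 0)^2)"
    by (rule integrable_normal_moment) (use mu in simp)
  have "integrable lborel (\<lambda>x. normal_density 0 (sqrt (mu/2)) x * (x - 0)^0
     + normal_density 0 (sqrt (mu/2)) x * (x - 0)^2)"
    by (rule Bochner_Integration.integrable_add[OF i0 i2])
  then have "integrable lborel (\<lambda>x. sqrt (pi * mu) * (normal_density 0 (sqrt (mu/2)) x * (x - 0)^0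
     + normal_density 0 (sqrt (mu/2)) x * (x - 0)^2))"
    by (rule integrable_mult_right)
  moreover have "(\<lambda>x. exp (- x\<^sup>2 / mu) * (1 + x\<^sup>2)) = (\<lambda>x. sqrt (pi * mu) * (normal_density 0 (sqrt (mu/2)) x * (x - 0)^0
     + normal_density 0 (sqrt (mu/2)) x * (x - 0)^2))"
    by (rule ext, subst gauss_exp_normal[OF mu]) (simp add: algebra_simps)
  ultimately show ?thesis by simp
qed

lemma gauss_nn_finite:
  fixes mu :: real assumes mu: "mu > 0"
  shows "(\<integral>\<^sup>+x. ennreal (exp (- x\<^sup>2 / mu) * (1 + x\<^sup>2)) \<partial>lborel) < \<infinity>"
proof -
  have "(\<integral>\<^sup>+x. ennreal (norm (exp (- x\<^sup>2 / mu) * (1 + x\<^sup>2))) \<partial>lborel) < \<infinity>"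
    using gauss_integrable[OF mu] unfolding integrable_iff_bounded by simp
  then show ?thesis by (simp add: abs_mult)
qed

lemma gauss_nn_finite0:
  fixes mu :: real assumes mu: "mu > 0"
  shows "(\<integral>\<^sup>+x. ennreal (exp (- x\<^sup>2 / mu)) \<partial>lborel) < \<infinity>"
proof -
  have "(\<integral>\<^sup>+x. ennreal (exp (- x\<^sup>2 / mu)) \<partial>lborel) \<le> (\<integral>\<^sup>+x. ennreal (exp (- x\<^sup>2 / mu) * (1 + x\<^sup>2)) \<partial>lborel)"
    by (intro nn_integral_mono ennreal_leI) (simp add: add_increasing2)
  then show ?thesis using gauss_nn_finite[OF mu] by (simp add: order.strict_trans1)
qed

lemma invsqrt_has_integral:
  "((\<lambda>x::real. if x \<in> {-1..1} then \<bar>x\<bar> powr (-1/2) else 0) has_integral 4) UNIV"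
proof -
  have 1: "((\<lambda>x::real. x powr (-1/2)) has_integral 2) {0..1}"
    using has_integral_powr_from_0[of "-1/2" 1] by simp
  have 2: "((\<lambda>x::real. \<bar>x\<bar> powr (-1/2)) has_integral 2) {0..1}"
    using 1 by (subst has_integral_cong[where g="\<lambda>x. x powr (-1/2)"]) auto
  have 3: "((\<lambda>x::real. \<bar>x\<bar> powr (-1/2)) has_integral 2) {-1..0}"
  proof -
    have "((\<lambda>x. (\<lambda>x::real. \<bar>x\<bar> powr (-1/2)) (-x)) has_integral 2) {-1..-0}"
      by (rule has_integral_reflect_real[where f="\<lambda>x::real. \<bar>x\<bar> powr (-1/2)" and a=0 and b=1 and i=2, THEN iffD2, OF 2])
    then show ?thesis by simp
  qed
  have "((\<lambda>x::real. \<bar>x\<bar> powr (-1/2)) has_integral 2 + 2) {-1..1}"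
    by (rule has_integral_combine[OF _ _ 3 2]) auto
  then show ?thesis
    by (subst has_integral_restrict_UNIV) simp
qed

lemma invsqrt_nn:
  "(\<integral>\<^sup>+x. ennreal (indicator {-1..1} x * \<bar>x\<bar> powr (-1/2)) \<partial>lborel) = 4"
proof -
  have "(\<integral>\<^sup>+x. ennreal (if x \<in> {-1..1} then \<bar>x\<bar> powr (-1/2) else 0) \<partial>lborel) = ennreal 4"
    by (rule nn_integral_has_integral_lborel[OF _ _ invsqrt_has_integral]) auto
  moreover have "(\<integral>\<^sup>+x. ennreal (indicator {-1..1} x * \<bar>x\<bar> powr (-1/2)) \<partial>lborel) =
     (\<integral>\<^sup>+x. ennreal (if x \<in> {-1..1} then \<bar>x\<bar> powr (-1/2) else 0) \<partial>lborel)"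
    by (intro nn_integral_cong) (auto simp: indicator_def)
  ultimately show ?thesis by simp
qed

lemma gauss_invsqrt_finite:
  fixes mu :: real assumes mu: "mu > 0"
  shows "(\<integral>\<^sup>+x. ennreal (exp (- x\<^sup>2 / mu) * \<bar>x\<bar> powr (-1/2)) \<partial>lborel) < \<infinity>"
proof -
  have "(\<integral>\<^sup>+x. ennreal (exp (- x\<^sup>2 / mu) * \<bar>x\<bar> powr (-1/2)) \<partial>lborel)
      \<le> (\<integral>\<^sup>+x. ennreal (indicator {-1..1} x * \<bar>x\<bar> powr (-1/2)) + ennreal (exp (- x\<^sup>2 / mu)) \<partial>lborel)"
  proof (intro nn_integral_mono)
    fix x :: real
    have "exp (- x\<^sup>2 / mu) * \<bar>x\<bar> powr (-1/2) \<le> indicator {-1..1} x * \<bar>x\<bar> powr (-1/2) + exp (- x\<^sup>2 / mu)"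
    proof (cases "\<bar>x\<bar> \<le> 1")
      case True
      have "exp (- x\<^sup>2 / mu) \<le> 1" using mu by simp
      then have "exp (- x\<^sup>2 / mu) * \<bar>x\<bar> powr (-1/2) \<le> 1 * \<bar>x\<bar> powr (-1/2)"
        by (intro mult_right_mono) auto
      moreover have "x \<in> {-1..1}" using True by auto
      ultimately show ?thesis by (auto intro!: add_increasing2)
    next
      case False
      have "\<bar>x\<bar> powr (-1/2) \<le> 1 powr (-1/2)"
        using False by (intro powr_mono2') auto
      then have "\<bar>x\<bar> powr (-1/2) \<le> 1" by simp
      then have "exp (- x\<^sup>2 / mu) * \<bar>x\<bar> powr (-1/2) \<le> exp (- x\<^sup>2 / mu) * 1"
        by (intro mult_left_mono) auto
      moreover have "x \<notin> {-1..1}" using False by auto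
      ultimately show ?thesis by simp
    qed
    then show "ennreal (exp (- x\<^sup>2 / mu) * \<bar>x\<bar> powr (-1/2)) \<le> ennreal (indicator {-1..1} x * \<bar>x\<bar> powr (-1/2)) + ennreal (exp (- x\<^sup>2 / mu))"
    proof -
      have "ennreal (indicator {-1..1} x * \<bar>x\<bar> powr (-1/2) + exp (- x\<^sup>2 / mu)) =
            ennreal (indicator {-1..1} x * \<bar>x\<bar> powr (-1/2)) + ennreal (exp (- x\<^sup>2 / mu))"
        by (rule ennreal_plus) auto
      with ennreal_leI[OF \<open>exp (- x\<^sup>2 / mu) * \<bar>x\<bar> powr (-1/2) \<le> _\<close>] show ?thesis by simp
    qed
  qed
  also have "\<dots> = (\<integral>\<^sup>+x. ennreal (indicator {-1..1} x * \<bar>x\<bar> powr (-1/2)) \<partial>lborel) + (\<integral>\<^sup>+x. ennreal (exp (- x\<^sup>2 / mu)) \<partial>lborel)"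
    by (rule nn_integral_add) auto
  also have "\<dots> = 4 + (\<integral>\<^sup>+x. ennreal (exp (- x\<^sup>2 / mu)) \<partial>lborel)"
    by (simp only: invsqrt_nn)
  also have "\<dots> < \<infinity>" using gauss_nn_finite0[OF mu] by simp
  finally show ?thesis .
qed


lemma AE_lborel_coord_nz:
  fixes b0 :: "'a::euclidean_space"
  assumes b0: "b0 \<in> Basis"
  shows "AE z in (lborel :: 'a measure). z \<bullet> b0 \<noteq> 0"
proof -
  define f where "f = (\<lambda>b (x::real). if b = b0 then indicator {0::real} x else (1::ennreal))"
  have "(\<integral>\<^sup>+z. (\<Prod>b\<in>Basis. f b (z \<bullet> b)) \<partial>(lborel :: 'a measure)) = (\<Prod>b\<in>Basis. \<integral>\<^sup>+x. f b x \<partial>lborel)"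
    by (rule nn_integral_lborel_prod) (auto simp: f_def)
  also have "\<dots> = 0"
    using b0 by (intro prod_zero) (auto simp: f_def intro!: bexI[of _ b0])
  finally have "(\<integral>\<^sup>+z. indicator {z. z \<bullet> b0 = 0} z \<partial>(lborel :: 'a measure)) = 0"
    using b0 by (simp add: f_def indicator_def if_distrib prod.If_cases cong: if_cong)
  then have "emeasure (lborel :: 'a measure) {z. z \<bullet> b0 = 0} = 0"
    by simp
  then have "{z. z \<bullet> b0 = 0} \<in> null_sets (lborel :: 'a measure)"
    by (intro null_setsI) auto
  then show ?thesis
    by (rule AE_I') auto
qed

lemma AE_complex_nz: "AE z in (lborel :: complex measure). Re z \<noteq> 0 \<and> Im z \<noteq> 0"
proof -
  have "AE z in (lborel :: complex measure). z \<bullet> 1 \<noteq> 0"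
    by (rule AE_lborel_coord_nz) (simp add: Basis_complex_def)
  moreover have "AE z in (lborel :: complex measure). z \<bullet> \<i> \<noteq> 0"
    by (rule AE_lborel_coord_nz) (simp add: Basis_complex_def)
  ultimately show ?thesis by eventually_elim (simp add: inner_complex_def)
qed

lemma complex_prod_integrable:
  fixes f :: "real \<Rightarrow> real"
  assumes f[measurable]: "f \<in> borel_measurable borel" and nn: "\<And>x. 0 \<le> f x"
    and fin: "(\<integral>\<^sup>+x. ennreal (f x) \<partial>lborel) < \<infinity>"
  shows "integrable (lborel :: complex measure) (\<lambda>z. f (Re z) * f (Im z))"
proof (rule integrableI_bounded)
  show "(\<lambda>z. f (Re z) * f (Im z)) \<in> borel_measurable (lborel :: complex measure)" by measurable
  have "(\<integral>\<^sup>+z. ennreal (norm (f (Re z) * f (Im z))) \<partial>(lborel :: complex measure))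
     = (\<integral>\<^sup>+z. (\<Prod>b\<in>Basis. ennreal (f (z \<bullet> b))) \<partial>(lborel :: complex measure))"
    using nn by (intro nn_integral_cong) (simp add: Basis_complex_def inner_complex_def abs_mult ennreal_mult)
  also have "\<dots> = (\<Prod>b\<in>(Basis :: complex set). \<integral>\<^sup>+x. ennreal (f x) \<partial>lborel)"
    by (rule nn_integral_lborel_prod[where f="\<lambda>_ x. ennreal (f x)"]) auto
  also have "\<dots> = (\<integral>\<^sup>+x. ennreal (f x) \<partial>lborel) * (\<integral>\<^sup>+x. ennreal (f x) \<partial>lborel)"
    by (simp add: Basis_complex_def)
  also have "\<dots> < \<infinity>" using fin by (simp add: ennreal_mult_less_top)
  finally show "(\<integral>\<^sup>+z. ennreal (norm (f (Re z) * f (Im z))) \<partial>(lborel :: complex measure)) < \<infinity>" .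
qed

lemma ln_abs_bound:
  fixes t :: real assumes t: "t > 0"
  shows "\<bar>ln t\<bar> \<le> t + 2 / sqrt t"
proof (cases "t \<ge> 1")
  case True
  have "ln t \<le> t - 1" using t by (rule ln_le_minus_one)
  moreover have "0 \<le> ln t" using True by simp
  moreover have "0 \<le> 2 / sqrt t" using t by simp
  ultimately have "ln t \<le> t + 2 / sqrt t" by linarith
  then show ?thesis using \<open>0 \<le> ln t\<close> by simp
next
  case False
  have s: "sqrt t > 0" using t by simp
  have "ln (1 / sqrt t) \<le> 1 / sqrt t - 1" using s by (intro ln_le_minus_one) simp
  moreover have "ln (1 / sqrt t) = - ln t / 2"
    using t by (simp add: ln_div ln_sqrt)
  moreover have "ln t \<le> 0" using False t by simp
  ultimately have "- ln t \<le> 2 * (1 / sqrt t)" by linarith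
  moreover have "0 \<le> t" using t by simp
  ultimately show ?thesis using \<open>ln t \<le> 0\<close> by simp
qed

lemma cn_ln_integrable_lborel:
  fixes mu :: real assumes mu: "mu > 0"
  shows "integrable (lborel :: complex measure) (\<lambda>z. cn_density mu z * ln ((cmod z)\<^sup>2))"
proof -
  define a where "a = (\<lambda>x::real. exp (- x\<^sup>2 / mu) * (1 + x\<^sup>2))"
  define b where "b = (\<lambda>x::real. exp (- x\<^sup>2 / mu) * \<bar>x\<bar> powr (-1/2))"
  have ia: "integrable (lborel :: complex measure) (\<lambda>z. a (Re z) * a (Im z))"
    by (rule complex_prod_integrable) (use gauss_nn_finite[OF mu] in \<open>auto simp: a_def\<close>)
  have ib: "integrable (lborel :: complex measure) (\<lambda>z. b (Re z) * b (Im z))"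
    by (rule complex_prod_integrable) (use gauss_invsqrt_finite[OF mu] in \<open>auto simp: b_def\<close>)
  have iG: "integrable (lborel :: complex measure) (\<lambda>z. (1/(pi*mu)) * (a (Re z) * a (Im z) + 2 * (b (Re z) * b (Im z))))"
    using ia ib by (intro integrable_mult_right Bochner_Integration.integrable_add) auto
  show ?thesis
  proof (rule Bochner_Integration.integrable_bound[OF iG])
    show "(\<lambda>z. cn_density mu z * ln ((cmod z)\<^sup>2)) \<in> borel_measurable (lborel :: complex measure)"
      unfolding cn_density_def by measurable
    show "AE z in lborel. norm (cn_density mu z * ln ((cmod z)\<^sup>2))
        \<le> norm ((1/(pi*mu)) * (a (Re z) * a (Im z) + 2 * (b (Re z) * b (Im z))))"
      using AE_complex_nz
    proof eventually_elim
      case (elim z)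
      define x where "x = Re z"
      define y where "y = Im z"
      have x: "x \<noteq> 0" and y: "y \<noteq> 0" using elim by (auto simp: x_def y_def)
      define t where "t = x\<^sup>2 + y\<^sup>2"
      have tz: "(cmod z)\<^sup>2 = t" by (simp add: t_def x_def y_def cmod_power2)
      have t: "t > 0" using x by (simp add: t_def add_pos_nonneg)
      have dens: "cn_density mu z = exp (- x\<^sup>2 / mu) * exp (- y\<^sup>2 / mu) / (pi * mu)"
        unfolding cn_density_def tz by (simp add: t_def exp_add[symmetric] add_divide_distrib diff_divide_distrib)
      have h1: "t \<le> (1 + x\<^sup>2) * (1 + y\<^sup>2)" by (simp add: t_def algebra_simps)
      have xy: "\<bar>x\<bar> * \<bar>y\<bar> \<le> t"
      proof -
        have "0 \<le> (\<bar>x\<bar> - \<bar>y\<bar>)\<^sup>2" by simp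
        then have "2 * (\<bar>x\<bar> * \<bar>y\<bar>) \<le> t" by (simp add: t_def power2_eq_square algebra_simps)
        moreover have "0 \<le> \<bar>x\<bar> * \<bar>y\<bar>" by simp
        ultimately show ?thesis by linarith
      qed
      have pw: "\<bar>u\<bar> powr (-1/2) = 1 / sqrt \<bar>u\<bar>" if "u \<noteq> 0" for u :: real
        using that by (simp add: powr_minus_divide powr_half_sqrt)
      have h2: "1 / sqrt t \<le> \<bar>x\<bar> powr (-1/2) * \<bar>y\<bar> powr (-1/2)"
      proof -
        have "1 / sqrt t \<le> 1 / sqrt (\<bar>x\<bar> * \<bar>y\<bar>)"
          using xy x y t by (intro divide_left_mono) (auto intro!: mult_pos_pos)
        also have "\<dots> = \<bar>x\<bar> powr (-1/2) * \<bar>y\<bar> powr (-1/2)"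
          using x y pw[OF x] pw[OF y] by (simp add: real_sqrt_mult)
        finally show ?thesis .
      qed
      have "\<bar>ln t\<bar> \<le> (1 + x\<^sup>2) * (1 + y\<^sup>2) + 2 * (\<bar>x\<bar> powr (-1/2) * \<bar>y\<bar> powr (-1/2))"
        using ln_abs_bound[OF t] h1 h2 by simp
      then have "exp (- x\<^sup>2 / mu) * exp (- y\<^sup>2 / mu) / (pi * mu) * \<bar>ln t\<bar> \<le>
          exp (- x\<^sup>2 / mu) * exp (- y\<^sup>2 / mu) / (pi * mu) * ((1 + x\<^sup>2) * (1 + y\<^sup>2) + 2 * (\<bar>x\<bar> powr (-1/2) * \<bar>y\<bar> powr (-1/2)))"
        using mu by (intro mult_left_mono) auto
      also have "\<dots> = (1/(pi*mu)) * (a x * a y + 2 * (b x * b y))"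
        by (simp add: a_def b_def field_simps)
      finally have "cn_density mu z * \<bar>ln ((cmod z)\<^sup>2)\<bar> \<le> (1/(pi*mu)) * (a x * a y + 2 * (b x * b y))"
        using dens tz by simp
      moreover have "0 \<le> cn_density mu z" using mu by (simp add: cn_density_def)
      moreover have "0 \<le> (1/(pi*mu)) * (a x * a y + 2 * (b x * b y))"
        using mu by (simp add: a_def b_def)
      moreover have "0 \<le> a x * a y + 2 * (b x * b y)" by (simp add: a_def b_def)
      ultimately show ?case using mu by (simp add: x_def y_def abs_mult)
    qed
  qed
qed


lemma cn_ln_integrable:
  assumes mu: "mu > 0" and X: "distributed M lborel X (\<lambda>z. ennreal (cn_density mu z))"
  shows "integrable M (\<lambda>w. ln ((cmod (X w))\<^sup>2))" and "AE w in M. X w \<noteq> 0"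
proof -
  have nn: "\<And>z. 0 \<le> cn_density mu z" using mu by (simp add: cn_density_def)
  show "integrable M (\<lambda>w. ln ((cmod (X w))\<^sup>2))"
    using distributed_integrable[OF X, of "\<lambda>z. ln ((cmod z)\<^sup>2)"] nn cn_ln_integrable_lborel[OF mu]
    by simp
  have dm: "(\<lambda>z. ennreal (cn_density mu z)) \<in> borel_measurable (lborel :: complex measure)"
    unfolding cn_density_def by measurable
  have "AE z in density lborel (\<lambda>z. ennreal (cn_density mu z)). z \<noteq> 0"
    using AE_lborel_singleton[of 0] by (subst AE_density[OF dm]) (auto elim: AE_mp)
  then have "AE z in distr M lborel X. z \<noteq> 0"
    by (subst distributed_distr_eq_density[OF X])
  then show "AE w in M. X w \<noteq> 0"
    by (rule AE_distrD[OF distributed_measurable[OF X]])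
qed

lemma Gmax_measurable:
  assumes "\<And>i. i < K \<Longrightarrow> H i \<in> borel_measurable M"
  shows "(\<lambda>w. Gmax K H w) \<in> borel_measurable M"
  unfolding Gmax_def using assms
  by (intro borel_measurable_Max) auto

lemma Gmax_facts:
  assumes K: "K \<ge> 1" and mu: "\<And>i. i < K \<Longrightarrow> mu i > 0"
    and H: "\<And>i. i < K \<Longrightarrow> distributed M lborel (H i) (\<lambda>z. ennreal (cn_density (mu i) z))"
  shows "integrable M (\<lambda>w. ln (Gmax K H w))" and "AE w in M. Gmax K H w > 0"
proof -
  have Hm: "\<And>i. i < K \<Longrightarrow> H i \<in> borel_measurable M"
    using H distributed_measurable by fastforce
  have gm: "(\<lambda>w. Gmax K H w) \<in> borel_measurable M" by (rule Gmax_measurable[OF Hm])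
  have int: "integrable M (\<lambda>w. \<Sum>i<K. \<bar>ln ((cmod (H i w))\<^sup>2)\<bar>)"
  proof (rule Bochner_Integration.integrable_sum)
    fix i assume "i \<in> {..<K}"
    then show "integrable M (\<lambda>w. \<bar>ln ((cmod (H i w))\<^sup>2)\<bar>)"
      using cn_ln_integrable(1)[OF mu H] by (intro integrable_abs) auto
  qed
  show "integrable M (\<lambda>w. ln (Gmax K H w))"
  proof (rule Bochner_Integration.integrable_bound[OF int])
    show "(\<lambda>w. ln (Gmax K H w)) \<in> borel_measurable M" using gm by measurable
    show "AE w in M. norm (ln (Gmax K H w)) \<le> norm (\<Sum>i<K. \<bar>ln ((cmod (H i w))\<^sup>2)\<bar>)"
    proof (rule AE_I2)
      fix w
      have "0 \<in> {..<K}" using K by auto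
      then have ne: "(\<lambda>i. (cmod (H i w))\<^sup>2) ` {..<K} \<noteq> {}" by blast
      have "Gmax K H w \<in> (\<lambda>i. (cmod (H i w))\<^sup>2) ` {..<K}"
        unfolding Gmax_def by (rule Max_in) (use ne in auto)
      then obtain j where j: "j < K" "Gmax K H w = (cmod (H j w))\<^sup>2" by auto
      have "\<bar>ln (Gmax K H w)\<bar> \<le> (\<Sum>i<K. \<bar>ln ((cmod (H i w))\<^sup>2)\<bar>)"
        unfolding j(2) using j(1) by (intro member_le_sum[where f="\<lambda>i. \<bar>ln ((cmod (H i w))\<^sup>2)\<bar>"]) auto
      then show "norm (ln (Gmax K H w)) \<le> norm (\<Sum>i<K. \<bar>ln ((cmod (H i w))\<^sup>2)\<bar>)"
        by (simp add: sum_nonneg)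
    qed
  qed
  have "AE w in M. H 0 w \<noteq> 0" using cn_ln_integrable(2)[OF mu H] K by auto
  then show "AE w in M. Gmax K H w > 0"
  proof eventually_elim
    case (elim w)
    have "(cmod (H 0 w))\<^sup>2 \<le> Gmax K H w"
      unfolding Gmax_def using K by (intro Max_ge) auto
    moreover have "(cmod (H 0 w))\<^sup>2 > 0" using elim by simp
    ultimately show ?case by linarith
  qed
qed

lemma (in prob_space) indep_Gmax_He:
  assumes ind: "indep_vars (\<lambda>_. borel) (\<lambda>j. case j of None \<Rightarrow> He | Some i \<Rightarrow> H i) (insert None (Some ` {..<K}))"
  shows "indep_var borel (\<lambda>w. (cmod (He w))\<^sup>2) borel (\<lambda>w. Gmax K H w)"
proof -
  define Y where "Y = (\<lambda>j w. (cmod ((case j of None \<Rightarrow> He | Some i \<Rightarrow> H i) w))\<^sup>2)"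
  have ind2: "indep_vars (\<lambda>_. borel) Y (insert None (Some ` {..<K}))"
    unfolding Y_def by (rule indep_vars_compose2[OF ind]) auto
  have "indep_var
    borel ((\<lambda>f. f None) \<circ> (\<lambda>\<omega>. restrict (\<lambda>i. Y i \<omega>) {None}))
    borel ((\<lambda>f. Max (f`(Some ` {..<K}))) \<circ> (\<lambda>\<omega>. restrict (\<lambda>i. Y i \<omega>) (Some ` {..<K})))"
    by (intro indep_var_compose[OF indep_var_restrict[OF ind2]] borel_measurable_Max) auto
  also have "((\<lambda>f. f None) \<circ> (\<lambda>\<omega>. restrict (\<lambda>i. Y i \<omega>) {None})) = (\<lambda>w. (cmod (He w))\<^sup>2)"
    by (auto simp: Y_def)
  also have "((\<lambda>f. Max (f`(Some ` {..<K}))) \<circ> (\<lambda>\<omega>. restrict (\<lambda>i. Y i \<omega>) (Some ` {..<K}))) = (\<lambda>w. Gmax K H w)"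
  proof (rule ext)
    fix w
    have "(\<lambda>i\<in>Some ` {..<K}. Y i w) ` (Some ` {..<K}) = (\<lambda>i. (cmod (H i w))\<^sup>2) ` {..<K}"
      by (force simp: Y_def image_iff)
    then show "((\<lambda>f. Max (f`(Some ` {..<K}))) \<circ> (\<lambda>\<omega>. restrict (\<lambda>i. Y i \<omega>) (Some ` {..<K}))) w = Gmax K H w"
      by (simp add: Gmax_def)
  qed
  finally show ?thesis .
qed


theorem corollary3:
  fixes M :: "'a measure" and K :: nat and mu :: "nat \<Rightarrow> real" and mu_e :: real
    and H :: "nat \<Rightarrow> 'a \<Rightarrow> complex" and He :: "'a \<Rightarrow> complex"
  assumes "prob_space M"
    and "K \<ge> 1"
    and "\<And>i. i < K \<Longrightarrow> mu i > 0" and "mu_e > 0"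
    and "\<And>i. i < K \<Longrightarrow> distributed M lborel (H i) (\<lambda>z. ennreal (cn_density (mu i) z))"
    and "distributed M lborel He (\<lambda>z. ennreal (cn_density mu_e z))"
    and "prob_space.indep_vars M (\<lambda>_. borel)
           (\<lambda>j. case j of None \<Rightarrow> He | Some i \<Rightarrow> H i) (insert None (Some ` {..<K}))"
  shows "((\<lambda>P. R_plus M K H He P) \<longlongrightarrow>
            (\<integral>w. max 0 (ln (Gmax K H w / (cmod (He w))\<^sup>2)) \<partial>M)) at_top \<and>
         ((\<lambda>P. R_minus M K H He P) \<longlongrightarrow>
            (SUP T \<in> {0..}. measure M {w \<in> space M. Gmax K H w \<ge> T} *
               cond_exp_event M (\<lambda>w. ln (Gmax K H w / (cmod (He w))\<^sup>2))
                 {w \<in> space M. Gmax K H w \<ge> T})) at_top"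
proof -
  interpret prob_space M by (rule assms(1))
  have Hm: "\<And>i. i < K \<Longrightarrow> H i \<in> borel_measurable M"
    using assms(5) distributed_measurable by fastforce
  have gm[measurable]: "(\<lambda>w. Gmax K H w) \<in> borel_measurable M"
    by (rule Gmax_measurable[OF Hm])
  have Hem[measurable]: "He \<in> borel_measurable M"
    using assms(6) distributed_measurable by fastforce
  have Lg: "integrable M (\<lambda>w. ln (Gmax K H w))" and AEg: "AE w in M. Gmax K H w > 0"
    using Gmax_facts[OF assms(2) assms(3) assms(5)] by auto
  have Le: "integrable M (\<lambda>w. ln ((cmod (He w))\<^sup>2))" and AEe': "AE w in M. He w \<noteq> 0"
    using cn_ln_integrable[OF assms(4) assms(6)] by auto
  have ind: "indep_var borel (\<lambda>w. (cmod (He w))\<^sup>2) borel (\<lambda>w. Gmax K H w)"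
    by (rule indep_Gmax_He[OF assms(7)])
  have AEpos: "AE w in M. Gmax K H w > 0 \<and> (cmod (He w))\<^sup>2 > 0"
    using AEg AEe' by eventually_elim auto
  define mE where "mE = (\<integral>w. ln ((cmod (He w))\<^sup>2) \<partial>M)"
  define hb where "hb = exp mE"
  have hb: "hb > 0" "ln hb = mE" by (auto simp: hb_def)
  define D where "D = (\<lambda>w. ln (Gmax K H w) - ln ((cmod (He w))\<^sup>2))"
  have iD: "integrable M D" unfolding D_def using Lg Le by (rule Bochner_Integration.integrable_diff)
  have iaD: "integrable M (\<lambda>w. \<bar>D w\<bar>)" using iD by (rule integrable_abs)
  have Dm[measurable]: "D \<in> borel_measurable M" unfolding D_def by measurable
  have lndiv: "AE w in M. ln (Gmax K H w / (cmod (He w))\<^sup>2) = D w"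
    using AEpos by eventually_elim (auto simp: D_def ln_divide_pos)
  have iEm: "integrable M (\<lambda>w. ln ((cmod (He w))\<^sup>2) - mE)"
    using Le by (intro Bochner_Integration.integrable_diff) auto
  have zero: "integrable M (\<lambda>w. (ln ((cmod (He w))\<^sup>2) - mE) * \<phi> (Gmax K H w)) \<and>
      (\<integral>w. (ln ((cmod (He w))\<^sup>2) - mE) * \<phi> (Gmax K H w) \<partial>M) = 0"
    if phim: "\<phi> \<in> borel_measurable borel" and phib: "\<And>x. \<bar>\<phi> x\<bar> \<le> 1" for \<phi> :: "real \<Rightarrow> real"
  proof -
    have i2: "integrable M (\<lambda>w. \<phi> (Gmax K H w))"
      using phib phim by (intro integrable_const_bound[where B=1]) auto
    have iv: "indep_var borel (\<lambda>w. ln ((cmod (He w))\<^sup>2) - mE) borel (\<lambda>w. \<phi> (Gmax K H w))"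
      using indep_var_compose[OF ind, of "\<lambda>x. ln x - mE" borel \<phi> borel] phim
      by (simp add: comp_def)
    have "(\<integral>w. ln ((cmod (He w))\<^sup>2) - mE \<partial>M) = 0"
      using Le by (simp add: mE_def prob_space)
    then show ?thesis
      using indep_var_integrable[OF iv iEm i2] indep_var_lebesgue_integral[OF iv iEm i2] by simp
  qed
  define V1 where "V1 = (\<integral>w. max 0 (ln (Gmax K H w / (cmod (He w))\<^sup>2)) \<partial>M)"
  have iV1: "integrable M (\<lambda>w. max 0 (ln (Gmax K H w / (cmod (He w))\<^sup>2)))"
  proof (rule Bochner_Integration.integrable_bound[OF iD])
    show "(\<lambda>w. max 0 (ln (Gmax K H w / (cmod (He w))\<^sup>2))) \<in> borel_measurable M" by measurable
    show "AE w in M. norm (max 0 (ln (Gmax K H w / (cmod (He w))\<^sup>2))) \<le> norm (D w)"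
      using lndiv by eventually_elim auto
  qed
  have V1nn: "0 \<le> V1" unfolding V1_def by (intro integral_nonneg_AE) auto
  have up1: "(\<integral>w. max 0 (ln (1 + Gmax K H w * p (Gmax K H w)) - ln (1 + (cmod (He w))\<^sup>2 * p (Gmax K H w))) \<partial>M) \<le> V1"
    if p: "p \<in> admissible_power M K H P" for p P
  proof -
    have pnn: "\<And>x. 0 \<le> p x" using p by (auto simp: admissible_power_def)
    show ?thesis unfolding V1_def
    proof (rule integral_mono_AE'[OF iV1])
      show "AE w in M. max 0 (ln (1 + Gmax K H w * p (Gmax K H w)) - ln (1 + (cmod (He w))\<^sup>2 * p (Gmax K H w)))
          \<le> max 0 (ln (Gmax K H w / (cmod (He w))\<^sup>2))"
        using AEpos lndiv
      proof eventually_elim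
        case (elim w)
        then show ?case
          using ln_diff_bound(2)[of "Gmax K H w" "(cmod (He w))\<^sup>2" "p (Gmax K H w)"] pnn
          by (auto simp: D_def)
      qed
    qed auto
  qed
  have adm_const: "(\<lambda>_. P) \<in> admissible_power M K H P" if "0 \<le> P" for P
    using that by (auto simp: admissible_power_def prob_space)
  have bdd1: "bdd_above ((\<lambda>p. \<integral>w. max 0 (ln (1 + Gmax K H w * p (Gmax K H w)) - ln (1 + (cmod (He w))\<^sup>2 * p (Gmax K H w))) \<partial>M) ` admissible_power M K H P)" for P
    by (rule bdd_aboveI2[where M=V1]) (rule up1)
  have R1_le: "R_plus M K H He P \<le> V1" if "0 \<le> P" for P
    unfolding R_plus_def using adm_const[OF that] by (intro cSUP_least up1) auto
  have R1_ge: "(\<integral>w. max 0 (ln (1 + Gmax K H w * P) - ln (1 + (cmod (He w))\<^sup>2 * P)) \<partial>M) \<le> R_plus M K H He P"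
    if "0 \<le> P" for P
    unfolding R_plus_def using cSUP_upper[OF adm_const[OF that] bdd1] by simp
  have lim1: "((\<lambda>P. \<integral>w. max 0 (ln (1 + Gmax K H w * P) - ln (1 + (cmod (He w))\<^sup>2 * P)) \<partial>M) \<longlongrightarrow> V1) at_top"
    unfolding V1_def
  proof (rule integral_dominated_convergence_at_top[where w="\<lambda>w. \<bar>D w\<bar>"])
    show "(\<lambda>w. max 0 (ln (Gmax K H w / (cmod (He w))\<^sup>2))) \<in> borel_measurable M" by measurable
    show "(\<lambda>w. max 0 (ln (1 + Gmax K H w * P) - ln (1 + (cmod (He w))\<^sup>2 * P))) \<in> borel_measurable M" for P
      by measurable
    show "integrable M (\<lambda>w. \<bar>D w\<bar>)" by (rule iaD)
    show "AE w in M. ((\<lambda>P. max 0 (ln (1 + Gmax K H w * P) - ln (1 + (cmod (He w))\<^sup>2 * P)))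
        \<longlongrightarrow> max 0 (ln (Gmax K H w / (cmod (He w))\<^sup>2))) at_top"
      using AEpos lndiv
    proof eventually_elim
      case (elim w)
      then show ?case
        using ln_diff_tendsto[of "Gmax K H w" "(cmod (He w))\<^sup>2"]
        by (auto simp: D_def intro!: tendsto_max tendsto_const)
    qed
    show "\<forall>\<^sub>F P in at_top. AE w in M. norm (max 0 (ln (1 + Gmax K H w * P) - ln (1 + (cmod (He w))\<^sup>2 * P))) \<le> \<bar>D w\<bar>"
      using eventually_ge_at_top[of "0::real"]
    proof eventually_elim
      case (elim P)
      note P0 = elim
      show ?case using AEpos
      proof eventually_elim
        case (elim w)
        then show ?case
          using ln_diff_bound(1)[of "Gmax K H w" "(cmod (He w))\<^sup>2" P] P0
          by (auto simp: D_def)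
      qed
    qed
  qed
  have part1: "((\<lambda>P. R_plus M K H He P) \<longlongrightarrow> V1) at_top"
  proof (rule tendsto_sandwich[OF _ _ lim1 tendsto_const])
    show "\<forall>\<^sub>F P in at_top. (\<integral>w. max 0 (ln (1 + Gmax K H w * P) - ln (1 + (cmod (He w))\<^sup>2 * P)) \<partial>M) \<le> R_plus M K H He P"
      using eventually_ge_at_top[of "0::real"] by eventually_elim (rule R1_ge)
    show "\<forall>\<^sub>F P in at_top. R_plus M K H He P \<le> V1"
      using eventually_ge_at_top[of "0::real"] by eventually_elim (rule R1_le)
  qed
  define V2 where "V2 = (\<integral>w. max 0 (ln (Gmax K H w) - mE) \<partial>M)"
  have iGm: "integrable M (\<lambda>w. ln (Gmax K H w) - mE)"
    using Lg by (intro Bochner_Integration.integrable_diff) auto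
  have iV2: "integrable M (\<lambda>w. max 0 (ln (Gmax K H w) - mE))"
    by (rule Bochner_Integration.integrable_bound[OF iGm]) auto
  have V2nn: "0 \<le> V2" unfolding V2_def by (intro integral_nonneg_AE) auto
  have iJ: "integrable M (\<lambda>w. indicator {T..} (Gmax K H w) * (ln (Gmax K H w) - mE))" for T :: real
    by (rule Bochner_Integration.integrable_bound[OF iGm]) (auto simp: indicator_def)
  define J where "J = (\<lambda>T::real. \<integral>w. indicator {T..} (Gmax K H w) * (ln (Gmax K H w) - mE) \<partial>M)"
  have J_le: "J T \<le> V2" for T
    unfolding J_def V2_def by (intro integral_mono[OF iJ iV2]) (auto simp: indicator_def)
  have J_hb: "J hb = V2"
    unfolding J_def V2_def
  proof (rule integral_cong_AE)
    show "AE w in M. indicator {hb..} (Gmax K H w) * (ln (Gmax K H w) - mE) = max 0 (ln (Gmax K H w) - mE)"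
      using AEpos
    proof eventually_elim
      case (elim w)
      have "hb \<le> Gmax K H w \<longleftrightarrow> mE \<le> ln (Gmax K H w)"
        using elim by (simp add: hb_def ln_ge_iff)
      then show ?case by (auto simp: indicator_def)
    qed
  qed auto
  have ind_split: "(\<integral>w. indicator {T..} (Gmax K H w) * ln (Gmax K H w / (cmod (He w))\<^sup>2) \<partial>M) = J T" for T :: real
  proof -
    have z: "integrable M (\<lambda>w. (ln ((cmod (He w))\<^sup>2) - mE) * indicator {T..} (Gmax K H w)) \<and>
      (\<integral>w. (ln ((cmod (He w))\<^sup>2) - mE) * indicator {T..} (Gmax K H w) \<partial>M) = 0"
      by (rule zero) (auto simp: indicator_def)
    have "(\<integral>w. indicator {T..} (Gmax K H w) * ln (Gmax K H w / (cmod (He w))\<^sup>2) \<partial>M) =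
        (\<integral>w. indicator {T..} (Gmax K H w) * (ln (Gmax K H w) - mE) - (ln ((cmod (He w))\<^sup>2) - mE) * indicator {T..} (Gmax K H w) \<partial>M)"
    proof (rule integral_cong_AE)
      show "AE w in M. indicator {T..} (Gmax K H w) * ln (Gmax K H w / (cmod (He w))\<^sup>2) =
          indicator {T..} (Gmax K H w) * (ln (Gmax K H w) - mE) - (ln ((cmod (He w))\<^sup>2) - mE) * indicator {T..} (Gmax K H w)"
        using lndiv
      proof eventually_elim
        case (elim w)
        have e: "ln (Gmax K H w / (cmod (He w))\<^sup>2) = ln (Gmax K H w) - ln ((cmod (He w))\<^sup>2)"
          using elim by (simp add: D_def)
        show ?case unfolding e by (simp add: algebra_simps)
      qed
    qed auto
    also have "\<dots> = J T - 0"
      using z iJ[of T] by (simp add: J_def)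
    finally show ?thesis by simp
  qed
  have tm: "measure M {w \<in> space M. Gmax K H w \<ge> T} *
      cond_exp_event M (\<lambda>w. ln (Gmax K H w / (cmod (He w))\<^sup>2)) {w \<in> space M. Gmax K H w \<ge> T} = J T"
    for T :: real
  proof -
    let ?A = "{w \<in> space M. Gmax K H w \<ge> T}"
    have A: "?A \<in> sets M" by measurable
    have eqI: "(\<integral>w. indicator ?A w * ln (Gmax K H w / (cmod (He w))\<^sup>2) \<partial>M) =
        (\<integral>w. indicator {T..} (Gmax K H w) * ln (Gmax K H w / (cmod (He w))\<^sup>2) \<partial>M)"
      by (rule Bochner_Integration.integral_cong[OF refl]) (auto simp: indicator_def)
    show ?thesis
    proof (cases "measure M ?A = 0")
      case True
      have "emeasure M ?A = 0" using True by (simp add: emeasure_eq_measure)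
      then have "?A \<in> null_sets M" using A by (intro null_setsI)
      then have "AE w in M. w \<notin> ?A" by (rule AE_I') auto
      then have "(\<integral>w. indicator ?A w * ln (Gmax K H w / (cmod (He w))\<^sup>2) \<partial>M) = (\<integral>w. 0 \<partial>M)"
        by (intro integral_cong_AE) (auto elim!: eventually_mono)
      then have "J T = 0" using eqI ind_split[of T] by simp
      then show ?thesis using True by simp
    next
      case False
      then show ?thesis
        using eqI ind_split[of T] by (simp add: cond_exp_event_def)
    qed
  qed
  have target2: "(SUP T \<in> {0..}. measure M {w \<in> space M. Gmax K H w \<ge> T} *
               cond_exp_event M (\<lambda>w. ln (Gmax K H w / (cmod (He w))\<^sup>2))
                 {w \<in> space M. Gmax K H w \<ge> T}) = V2"
  proof -
    have "(SUP T \<in> {0..}. measure M {w \<in> space M. Gmax K H w \<ge> T} *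
               cond_exp_event M (\<lambda>w. ln (Gmax K H w / (cmod (He w))\<^sup>2))
                 {w \<in> space M. Gmax K H w \<ge> T}) = (SUP T \<in> {0..}. J T)"
      by (intro SUP_cong refl tm)
    also have "\<dots> = V2"
    proof (rule cSup_eq_maximum)
      show "V2 \<in> J ` {0..}" using J_hb hb by (auto intro!: image_eqI[of _ _ hb])
    qed (auto intro: J_le)
    finally show ?thesis .
  qed
  have up2: "(\<integral>w. (ln (1 + Gmax K H w * p (Gmax K H w)) - ln (1 + (cmod (He w))\<^sup>2 * p (Gmax K H w))) \<partial>M) \<le> V2"
    if p: "p \<in> admissible_power M K H P" for p P
  proof (cases "integrable M (\<lambda>w. ln (1 + Gmax K H w * p (Gmax K H w)) - ln (1 + (cmod (He w))\<^sup>2 * p (Gmax K H w)))")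
    case False
    then show ?thesis using V2nn by (simp add: not_integrable_integral_eq)
  next
    case True
    have pnn: "\<And>x. 0 \<le> p x" and pm: "p \<in> borel_measurable borel"
      using p by (auto simp: admissible_power_def)
    define \<phi> where "\<phi> = (\<lambda>x. hb * p x / (1 + hb * p x))"
    have phim: "\<phi> \<in> borel_measurable borel" unfolding \<phi>_def using pm by measurable
    have phib: "\<bar>\<phi> x\<bar> \<le> 1" for x
    proof -
      have "0 \<le> hb * p x" using pnn[of x] hb by simp
      then show ?thesis by (simp add: \<phi>_def divide_le_eq_1)
    qed
    have z: "integrable M (\<lambda>w. (ln ((cmod (He w))\<^sup>2) - mE) * \<phi> (Gmax K H w)) \<and>
      (\<integral>w. (ln ((cmod (He w))\<^sup>2) - mE) * \<phi> (Gmax K H w) \<partial>M) = 0"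
      by (rule zero[OF phim phib])
    have "(\<integral>w. (ln (1 + Gmax K H w * p (Gmax K H w)) - ln (1 + (cmod (He w))\<^sup>2 * p (Gmax K H w))) \<partial>M)
        \<le> (\<integral>w. max 0 (ln (Gmax K H w) - mE) - (ln ((cmod (He w))\<^sup>2) - mE) * \<phi> (Gmax K H w) \<partial>M)"
    proof (rule integral_mono_AE[OF True])
      show "integrable M (\<lambda>w. max 0 (ln (Gmax K H w) - mE) - (ln ((cmod (He w))\<^sup>2) - mE) * \<phi> (Gmax K H w))"
        using iV2 z by (intro Bochner_Integration.integrable_diff) auto
      show "AE w in M. ln (1 + Gmax K H w * p (Gmax K H w)) - ln (1 + (cmod (He w))\<^sup>2 * p (Gmax K H w))
          \<le> max 0 (ln (Gmax K H w) - mE) - (ln ((cmod (He w))\<^sup>2) - mE) * \<phi> (Gmax K H w)"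
        using AEpos
      proof eventually_elim
        case (elim w)
        define q where "q = p (Gmax K H w)"
        have q: "0 \<le> q" by (simp add: q_def pnn)
        have t: "ln (1 + exp mE * q) + (exp mE * q / (1 + exp mE * q)) * (ln ((cmod (He w))\<^sup>2) - mE)
            \<le> ln (1 + exp (ln ((cmod (He w))\<^sup>2)) * q)"
          by (rule ln_tangent[OF q])
        have t': "ln (1 + hb * q) + \<phi> (Gmax K H w) * (ln ((cmod (He w))\<^sup>2) - mE)
            \<le> ln (1 + (cmod (He w))\<^sup>2 * q)"
          using t elim by (simp add: hb_def \<phi>_def q_def)
        have b: "ln (1 + Gmax K H w * q) - ln (1 + hb * q) \<le> max 0 (ln (Gmax K H w) - ln hb)"
          using ln_diff_bound(2)[of "Gmax K H w" hb q] elim hb q by simp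
        show ?case using t' b hb unfolding q_def by (simp add: algebra_simps)
      qed
    qed
    also have "\<dots> = V2 - 0"
      using iV2 z by (simp add: V2_def)
    finally show ?thesis by simp
  qed
  have adm_thr: "(\<lambda>x. P * indicator {hb..} x) \<in> admissible_power M K H P" if P: "0 \<le> P" for P
  proof -
    have i: "integrable M (\<lambda>w. P * indicator {hb..} (Gmax K H w))"
      using P by (intro integrable_const_bound[where B=P]) (auto simp: indicator_def)
    have "(\<integral>w. P * indicator {hb..} (Gmax K H w) \<partial>M) \<le> (\<integral>w. P \<partial>M)"
      using P by (intro integral_mono[OF i]) (auto simp: indicator_def)
    then have "(\<integral>w. P * indicator {hb..} (Gmax K H w) \<partial>M) \<le> P" by (simp add: prob_space)
    then show ?thesis using P i by (auto simp: admissible_power_def)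
  qed
  have bdd2: "bdd_above ((\<lambda>p. \<integral>w. (ln (1 + Gmax K H w * p (Gmax K H w)) - ln (1 + (cmod (He w))\<^sup>2 * p (Gmax K H w))) \<partial>M) ` admissible_power M K H P)" for P
    by (rule bdd_aboveI2[where M=V2]) (rule up2)
  have R2_le: "R_minus M K H He P \<le> V2" if "0 \<le> P" for P
    unfolding R_minus_def using adm_thr[OF that] by (intro cSUP_least up2) auto
  have R2_ge: "(\<integral>w. (ln (1 + Gmax K H w * (P * indicator {hb..} (Gmax K H w))) - ln (1 + (cmod (He w))\<^sup>2 * (P * indicator {hb..} (Gmax K H w)))) \<partial>M) \<le> R_minus M K H He P"
    if "0 \<le> P" for P
    unfolding R_minus_def using cSUP_upper[OF adm_thr[OF that] bdd2] by simp
  have L2: "(\<integral>w. indicator {hb..} (Gmax K H w) * D w \<partial>M) = V2"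
  proof -
    have "(\<integral>w. indicator {hb..} (Gmax K H w) * D w \<partial>M) = (\<integral>w. indicator {hb..} (Gmax K H w) * ln (Gmax K H w / (cmod (He w))\<^sup>2) \<partial>M)"
      using lndiv by (intro integral_cong_AE) (auto elim!: eventually_mono)
    also have "\<dots> = V2" using ind_split[of hb] J_hb by simp
    finally show ?thesis .
  qed
  have lim2: "((\<lambda>P. \<integral>w. (ln (1 + Gmax K H w * (P * indicator {hb..} (Gmax K H w))) - ln (1 + (cmod (He w))\<^sup>2 * (P * indicator {hb..} (Gmax K H w)))) \<partial>M) \<longlongrightarrow> V2) at_top"
    unfolding L2[symmetric]
  proof (rule integral_dominated_convergence_at_top[where w="\<lambda>w. \<bar>D w\<bar>"])
    show "(\<lambda>w. indicator {hb..} (Gmax K H w) * D w) \<in> borel_measurable M" by measurable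
    show "(\<lambda>w. ln (1 + Gmax K H w * (P * indicator {hb..} (Gmax K H w))) - ln (1 + (cmod (He w))\<^sup>2 * (P * indicator {hb..} (Gmax K H w)))) \<in> borel_measurable M" for P
      by measurable
    show "integrable M (\<lambda>w. \<bar>D w\<bar>)" by (rule iaD)
    show "AE w in M. ((\<lambda>P. ln (1 + Gmax K H w * (P * indicator {hb..} (Gmax K H w))) - ln (1 + (cmod (He w))\<^sup>2 * (P * indicator {hb..} (Gmax K H w))))
        \<longlongrightarrow> indicator {hb..} (Gmax K H w) * D w) at_top"
      using AEpos
    proof eventually_elim
      case (elim w)
      then show ?case
        using ln_diff_tendsto[of "Gmax K H w" "(cmod (He w))\<^sup>2"]
        by (cases "hb \<le> Gmax K H w") (auto simp: D_def indicator_def)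
    qed
    show "\<forall>\<^sub>F P in at_top. AE w in M. norm (ln (1 + Gmax K H w * (P * indicator {hb..} (Gmax K H w))) - ln (1 + (cmod (He w))\<^sup>2 * (P * indicator {hb..} (Gmax K H w)))) \<le> \<bar>D w\<bar>"
      using eventually_ge_at_top[of "0::real"]
    proof eventually_elim
      case (elim P)
      note P0 = elim
      show ?case using AEpos
      proof eventually_elim
        case (elim w)
        have "0 \<le> P * indicator {hb..} (Gmax K H w)" using P0 by auto
        then show ?case
          using ln_diff_bound(1)[of "Gmax K H w" "(cmod (He w))\<^sup>2" "P * indicator {hb..} (Gmax K H w)"] elim
          by (simp add: D_def)
      qed
    qed
  qed
  have part2: "((\<lambda>P. R_minus M K H He P) \<longlongrightarrow> V2) at_top"
  proof (rule tendsto_sandwich[OF _ _ lim2 tendsto_const])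
    show "\<forall>\<^sub>F P in at_top. (\<integral>w. (ln (1 + Gmax K H w * (P * indicator {hb..} (Gmax K H w))) - ln (1 + (cmod (He w))\<^sup>2 * (P * indicator {hb..} (Gmax K H w)))) \<partial>M) \<le> R_minus M K H He P"
      using eventually_ge_at_top[of "0::real"] by eventually_elim (rule R2_ge)
    show "\<forall>\<^sub>F P in at_top. R_minus M K H He P \<le> V2"
      using eventually_ge_at_top[of "0::real"] by eventually_elim (rule R2_le)
  qed
  show ?thesis using part1 part2 target2 by (simp add: V1_def)
qed

end
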